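(* Let $E$ be a Banach $f$-algebra and let $(x_\alpha)_{\alpha\in A}$ and $(y_\beta)_{\beta\in A}$ be nets in $E$ such that $x_\alpha\xrightarrow{mw}x$ and $y_\beta\xrightarrow{mw}y$ for some $x,y\in E$, and such that $(x_\alpha)$ or $(y_\beta)$ is monotone. Then $x_\alpha y_\beta\xrightarrow{mw}xy$ (as a net indexed by $(\alpha,\beta)\in A\times A$).
   Context: All vector lattices are real and Archimedean. An $f$-algebra is a vector lattice with an associative multiplication making it an algebra, such that products of positive elements are positive and $x\wedge y=0$ implies $(xz)\wedge y=(zx)\wedge y=0$ for all $z\ge0$. A Banach $f$-algebra is an $f$-algebra which is a Banach lattice with $\|xy\|\le\|x\|\|y\|$. A net $(x_\alpha)$ in $E$ $mw$-converges to $x$ ($x_\alpha\xrightarrow{mw}x$) if $|x_\alpha-x|u\to0$ weakly for every $u\in E_+$. A net is monotone if it is increasing or decreasing. *)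

theory Defs
  imports Complex_Main
begin

definition labs :: "'a::{lattice, uminus} \<Rightarrow> 'a" where
  "labs x = sup x (- x)"

definition vector_lattice :: "'a::{real_vector, lattice} itself \<Rightarrow> bool" where
  "vector_lattice _ \<longleftrightarrow>
     (\<forall>x y z::'a. x \<le> y \<longrightarrow> x + z \<le> y + z) \<and>
     (\<forall>(x::'a) (c::real). 0 \<le> x \<and> 0 \<le> c \<longrightarrow> 0 \<le> c *\<^sub>R x) \<and>
     (\<forall>x y::'a. 0 \<le> x \<and> (\<forall>n::nat. real n *\<^sub>R x \<le> y) \<longrightarrow> x = 0)"

text \<open>f-algebra: associative multiplication (ring structure of the type class),
  positive products of positives, and the f-algebra disjointness condition.\<close>
definition f_algebra :: "'a::{real_algebra, lattice} itself \<Rightarrow> bool" where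
  "f_algebra T \<longleftrightarrow> vector_lattice T \<and>
     (\<forall>x y::'a. 0 \<le> x \<and> 0 \<le> y \<longrightarrow> 0 \<le> x * y) \<and>
     (\<forall>x y z::'a. inf x y = 0 \<and> 0 \<le> z \<longrightarrow> inf (x * z) y = 0 \<and> inf (z * x) y = 0)"

definition banach_f_algebra :: "'a::{real_normed_algebra, banach, lattice} itself \<Rightarrow> bool" where
  "banach_f_algebra T \<longleftrightarrow> f_algebra T \<and>
     (\<forall>x y::'a. labs x \<le> labs y \<longrightarrow> norm x \<le> norm y)"

definition directed_set :: "('i \<Rightarrow> 'i \<Rightarrow> bool) \<Rightarrow> bool" where
  "directed_set le \<longleftrightarrow> (\<exists>a. le a a) \<and> (\<forall>a. le a a) \<and>
     (\<forall>a b c. le a b \<and> le b c \<longrightarrow> le a c) \<and> (\<forall>a b. \<exists>c. le a c \<and> le b c)"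

definition net_filter :: "('i \<Rightarrow> 'i \<Rightarrow> bool) \<Rightarrow> 'i filter" where
  "net_filter le = (INF a. principal {b. le a b})"

definition prod_order :: "('i \<Rightarrow> 'i \<Rightarrow> bool) \<Rightarrow> ('j \<Rightarrow> 'j \<Rightarrow> bool) \<Rightarrow> 'i \<times> 'j \<Rightarrow> 'i \<times> 'j \<Rightarrow> bool" where
  "prod_order le1 le2 p q \<longleftrightarrow> le1 (fst p) (fst q) \<and> le2 (snd p) (snd q)"

definition weak_conv :: "('i \<Rightarrow> 'a::real_normed_vector) \<Rightarrow> 'a \<Rightarrow> 'i filter \<Rightarrow> bool" where
  "weak_conv x l F \<longleftrightarrow> (\<forall>f::'a \<Rightarrow> real. bounded_linear f \<longrightarrow> ((\<lambda>i. f (x i)) \<longlongrightarrow> f l) F)"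

definition mw_conv :: "('i \<Rightarrow> 'a::{real_normed_algebra, lattice}) \<Rightarrow> 'a \<Rightarrow> 'i filter \<Rightarrow> bool" where
  "mw_conv x l F \<longleftrightarrow> (\<forall>u::'a. 0 \<le> u \<longrightarrow> weak_conv (\<lambda>i. labs (x i - l) * u) 0 F)"

definition monotone_net :: "('i \<Rightarrow> 'i \<Rightarrow> bool) \<Rightarrow> ('i \<Rightarrow> 'a::order) \<Rightarrow> bool" where
  "monotone_net le x \<longleftrightarrow> (\<forall>a b. le a b \<longrightarrow> x a \<le> x b) \<or> (\<forall>a b. le a b \<longrightarrow> x b \<le> x a)"

end

theory Submission
  imports Defs
begin

lemma bl0: "bounded_linear f \<Longrightarrow> f 0 = 0" using linear_0[OF bounded_linear.linear] by blast
lemma bld: "bounded_linear f \<Longrightarrow> f (a - b) = f a - f b" using linear_diff[OF bounded_linear.linear] by blast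
lemma bla: "bounded_linear f \<Longrightarrow> f (a + b) = f a + f b" using linear_add[OF bounded_linear.linear] by blast
lemma bls: "bounded_linear f \<Longrightarrow> f (c *\<^sub>R b) = c *\<^sub>R f b" using linear_scale[OF bounded_linear.linear] by blast

definition lpos :: "'a::{lattice,zero} \<Rightarrow> 'a" where "lpos x = sup x 0"
definition lneg :: "'a::{lattice,zero,uminus} \<Rightarrow> 'a" where "lneg x = sup (- x) 0"
definition posf :: "('a::{real_normed_vector,lattice} \<Rightarrow> real) \<Rightarrow> bool" where
  "posf h \<longleftrightarrow> bounded_linear h \<and> (\<forall>z. 0 \<le> z \<longrightarrow> 0 \<le> h z)"

lemma dir_trans: "directed_set le \<Longrightarrow> le a b \<Longrightarrow> le b c \<Longrightarrow> le a c"
  unfolding directed_set_def by blast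

lemma dir_refl: "directed_set le \<Longrightarrow> le a a"
  unfolding directed_set_def by blast

lemma dir_up: "directed_set le \<Longrightarrow> \<exists>c. le a c \<and> le b c"
  unfolding directed_set_def by blast

lemma eventually_net:
  assumes "directed_set le"
  shows "eventually P (net_filter le) \<longleftrightarrow> (\<exists>a. \<forall>b. le a b \<longrightarrow> P b)"
proof -
  have "eventually P (INF a\<in>UNIV. principal {b. le a b}) \<longleftrightarrow> (\<exists>a\<in>UNIV. eventually P (principal {b. le a b}))"
  proof (rule eventually_INF_base)
    show "UNIV \<noteq> {}" by simp
    fix a b
    obtain c where c: "le a c" "le b c" using dir_up[OF assms] by blast
    have "{d. le c d} \<subseteq> {d. le a d} \<inter> {d. le b d}"
      using dir_trans[OF assms] c by blast
    then have "principal {d. le c d} \<le> inf (principal {d. le a d}) (principal {d. le b d})"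
      by (simp add: inf_principal)
    then show "\<exists>x\<in>UNIV. principal {d. le x d} \<le> inf (principal {d. le a d}) (principal {d. le b d})"
      by blast
  qed
  then show ?thesis unfolding net_filter_def by (simp add: eventually_principal)
qed

lemma net_nontriv: "directed_set le \<Longrightarrow> \<not> trivial_limit (net_filter le)"
  unfolding trivial_limit_def using eventually_net dir_refl by metis

lemma dir_prod: assumes d: "directed_set le" shows "directed_set (prod_order le le)"
  unfolding directed_set_def
proof (intro conjI allI impI)
  fix p q r
  show "prod_order le le p p" using dir_refl[OF d] by (simp add: prod_order_def)
  then show "\<exists>a. prod_order le le a a" by blast
  show "prod_order le le p q \<and> prod_order le le q r \<Longrightarrow> prod_order le le p r"
    using dir_trans[OF d] unfolding prod_order_def by blast
  obtain c1 where c1: "le (fst p) c1" "le (fst q) c1" using dir_up[OF d] by blast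
  obtain c2 where c2: "le (snd p) c2" "le (snd q) c2" using dir_up[OF d] by blast
  show "\<exists>c. prod_order le le p c \<and> prod_order le le q c"
    by (rule exI[of _ "(c1, c2)"]) (simp add: prod_order_def c1 c2)
qed

lemma lim_fst: assumes d: "directed_set le"
  shows "filterlim fst (net_filter le) (net_filter (prod_order le le))"
  unfolding filterlim_iff
proof (intro allI impI)
  fix P assume "eventually P (net_filter le)"
  then obtain a where a: "\<And>b. le a b \<Longrightarrow> P b" using eventually_net[OF d] by blast
  have "\<forall>p. prod_order le le (a, a) p \<longrightarrow> P (fst p)" using a by (simp add: prod_order_def)
  then show "eventually (\<lambda>p. P (fst p)) (net_filter (prod_order le le))"
    unfolding eventually_net[OF dir_prod[OF d]] by blast
qed

lemma lim_snd: assumes d: "directed_set le"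
  shows "filterlim snd (net_filter le) (net_filter (prod_order le le))"
  unfolding filterlim_iff
proof (intro allI impI)
  fix P assume "eventually P (net_filter le)"
  then obtain a where a: "\<And>b. le a b \<Longrightarrow> P b" using eventually_net[OF d] by blast
  have "\<forall>p. prod_order le le (a, a) p \<longrightarrow> P (snd p)" using a by (simp add: prod_order_def)
  then show "eventually (\<lambda>p. P (snd p)) (net_filter (prod_order le le))"
    unfolding eventually_net[OF dir_prod[OF d]] by blast
qed

context
  assumes tr: "\<And>x y z::'a::{real_normed_algebra,lattice}. x \<le> y \<Longrightarrow> x + z \<le> y + z"
    and sc: "\<And>(x::'a) (c::real). 0 \<le> x \<Longrightarrow> 0 \<le> c \<Longrightarrow> 0 \<le> c *\<^sub>R x"
    and pp: "\<And>x y::'a. 0 \<le> x \<Longrightarrow> 0 \<le> y \<Longrightarrow> 0 \<le> x * y"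
    and nm: "\<And>x y::'a. labs x \<le> labs y \<Longrightarrow> norm x \<le> norm y"
begin

lemma le_sub: "(x::'a) \<le> y \<longleftrightarrow> 0 \<le> y - x"
proof
  assume "x \<le> y" from tr[OF this, of "-x"] show "0 \<le> y - x" by simp
next
  assume "0 \<le> y - x" from tr[OF this, of x] show "x \<le> y" by simp
qed

lemma add_le2: "a \<le> b \<Longrightarrow> c \<le> d \<Longrightarrow> (a::'a) + c \<le> b + d"
  using tr[of a b c] tr[of c d b] by (simp add: add.commute order_trans)

lemma neg_le: "x \<le> y \<Longrightarrow> -(y::'a) \<le> -x"
  using tr[of x y "-x-y"] by (simp add: algebra_simps)

lemma sup_add: "sup x y + (z::'a) = sup (x+z) (y+z)"
proof (rule antisym)
  have "sup x y \<le> sup (x+z) (y+z) - z"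
  proof (rule sup_least)
    show "x \<le> sup (x+z) (y+z) - z" using tr[OF sup_ge1[of "x+z" "y+z"], of "-z"] by simp
    show "y \<le> sup (x+z) (y+z) - z" using tr[OF sup_ge2[of "y+z" "x+z"], of "-z"] by (simp add: sup_commute)
  qed
  from tr[OF this, of z] show "sup x y + z \<le> sup (x+z) (y+z)" by simp
  show "sup (x+z) (y+z) \<le> sup x y + z"
    by (intro sup_least tr) auto
qed

lemma inf_add: "inf x y + (z::'a) = inf (x+z) (y+z)"
proof (rule antisym)
  have "inf (x+z) (y+z) - z \<le> inf x y"
  proof (rule inf_greatest)
    show "inf (x+z) (y+z) - z \<le> x" using tr[OF inf_le1[of "x+z" "y+z"], of "-z"] by simp
    show "inf (x+z) (y+z) - z \<le> y" using tr[OF inf_le2[of "x+z" "y+z"], of "-z"] by simp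
  qed
  from tr[OF this, of z] show "inf (x+z) (y+z) \<le> inf x y + z" by simp
  show "inf x y + z \<le> inf (x+z) (y+z)"
    by (intro inf_greatest tr) auto
qed

lemma neg_sup: "-(sup x y) = inf (-x) (-(y::'a))"
proof (rule antisym)
  show "-(sup x y) \<le> inf (-x) (-y)" by (intro inf_greatest neg_le) auto
  have "sup x y \<le> -(inf (-x) (-y))"
    using neg_le[OF inf_le1[of "-x" "-y"]] neg_le[OF inf_le2[of "-x" "-y"]] by simp
  from neg_le[OF this] show "inf (-x) (-y) \<le> -(sup x y)" by simp
qed

lemma neg_inf: "-(inf x y) = sup (-x) (-(y::'a))"
  using neg_sup[of "-x" "-y"] by (metis minus_minus)

lemma sup_inf_sum: "sup x y + inf x y = x + (y::'a)"
proof -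
  have "inf (-x) (-y) + (x + y) = inf (-x + (x+y)) (-y + (x+y))" by (rule inf_add)
  also have "\<dots> = inf y x" by simp
  finally have "inf (-x) (-y) + (x + y) = inf y x" .
  then have "inf x y = -(sup x y) + (x + y)" by (simp add: neg_sup inf_commute)
  then show ?thesis by (simp add: algebra_simps)
qed

lemma pos_neg: "lpos x - lneg x = (x::'a)"
proof -
  have "lpos x - lneg x = sup x 0 + inf x 0" unfolding lpos_def lneg_def
    using neg_sup[of "-x" 0] by simp
  also have "\<dots> = x" using sup_inf_sum[of x 0] by simp
  finally show ?thesis .
qed

lemma le_labs: "x \<le> labs (x::'a)" "-x \<le> labs x" unfolding labs_def by auto

lemma labs_ge0: "0 \<le> labs (x::'a)"
proof -
  have "x + -x \<le> labs x + labs x" by (intro add_le2 le_labs)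
  then have "0 \<le> labs x + labs x" by simp
  from sc[OF this, of "1/2"] show ?thesis by (simp add: scaleR_add_right[symmetric] scaleR_add_left[symmetric])
qed

lemma lpos_ge0: "0 \<le> lpos (x::'a)" and lneg_ge0: "0 \<le> lneg (x::'a)"
  unfolding lpos_def lneg_def by auto

lemma labs_pos_neg: "labs x = lpos x + lneg (x::'a)"
proof -
  have "lpos x + lneg x = sup (x + lneg x) (0 + lneg x)" unfolding lpos_def by (rule sup_add)
  also have "x + lneg x = sup 0 x" unfolding lneg_def using sup_add[of "-x" 0 x]
    by (simp add: add.commute)
  finally have "lpos x + lneg x = sup (sup 0 x) (sup (-x) 0)" unfolding lneg_def by simp
  also have "\<dots> = sup (labs x) 0" unfolding labs_def by (simp add: ac_simps)
  also have "\<dots> = labs x" using labs_ge0[of x] by (simp add: sup_absorb1)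
  finally show ?thesis by simp
qed

lemma labs_of_pos: "0 \<le> p \<Longrightarrow> labs p = (p::'a)"
  unfolding labs_def using neg_le[of 0 p] by (simp add: sup_absorb1 order_trans)

lemma labs_minus: "labs (-x) = labs (x::'a)" unfolding labs_def by (simp add: sup_commute)

lemma labs_diff_comm: "labs (a - b) = labs (b - (a::'a))"
  using labs_minus[of "a - b"] by simp

lemma labs_triangle: "labs (x + y) \<le> labs x + labs (y::'a)"
  unfolding labs_def[of "x+y"]
  using add_le2[OF le_labs(1) le_labs(1), of x y] add_le2[OF le_labs(2) le_labs(2), of x y]
  by (simp add: algebra_simps)

lemma labs_diff_pos: "0 \<le> P \<Longrightarrow> 0 \<le> N \<Longrightarrow> labs (P - N) \<le> P + (N::'a)"
proof -
  assume P: "0 \<le> P" and N: "0 \<le> N"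
  have "-N \<le> N" using neg_le[OF N] N by (simp add: order_trans)
  have "-P \<le> P" using neg_le[OF P] P by (simp add: order_trans)
  show ?thesis unfolding labs_def
    using add_le2[OF order_refl \<open>-N \<le> N\<close>, of P] add_le2[OF \<open>-P \<le> P\<close> order_refl, of N]
    by (simp add: algebra_simps)
qed

lemma lpos_le_labs: "lpos x \<le> labs (x::'a)" and lneg_le_labs: "lneg x \<le> labs (x::'a)"
  unfolding lpos_def lneg_def using le_labs labs_ge0 by auto

lemma lpos_of_pos: "0 \<le> x \<Longrightarrow> lpos x = (x::'a)" and lneg_of_pos: "0 \<le> x \<Longrightarrow> lneg x = (0::'a)"
  unfolding lpos_def lneg_def using neg_le[of 0 x] by (auto simp: sup_absorb1 sup_absorb2)

lemma riesz:
  assumes "0 \<le> y" "0 \<le> a" "0 \<le> b" "y \<le> a + (b::'a)"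
  shows "0 \<le> inf y a" "inf y a \<le> a" "0 \<le> y - inf y a" "y - inf y a \<le> b"
proof -
  show "0 \<le> inf y a" "inf y a \<le> a" using assms by auto
  show "0 \<le> y - inf y a" using le_sub inf_le1 by blast
  have "y - inf y a = -inf y a + y" by simp
  also have "\<dots> = sup (-y) (-a) + y" by (simp add: neg_inf)
  also have "\<dots> = sup (-y + y) (-a + y)" by (rule sup_add)
  finally have "y - inf y a = sup (-y + y) (-a + y)" .
  also have "\<dots> \<le> b"
  proof (rule sup_least)
    show "-y + y \<le> b" using assms by simp
    show "-a + y \<le> b" using assms(4) le_sub[of y "a+b"] le_sub[of "-a+y" b] by (simp add: algebra_simps)
  qed
  finally show "y - inf y a \<le> b" .
qed

lemma scale_le: "x \<le> y \<Longrightarrow> 0 \<le> c \<Longrightarrow> c *\<^sub>R x \<le> c *\<^sub>R (y::'a)"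
  using sc le_sub by (metis scaleR_right_diff_distrib)

lemma mult_le_r: "a \<le> b \<Longrightarrow> 0 \<le> c \<Longrightarrow> a * c \<le> b * (c::'a)"
  using pp le_sub by (metis left_diff_distrib)

lemma mult_le_l: "a \<le> b \<Longrightarrow> 0 \<le> c \<Longrightarrow> c * a \<le> c * (b::'a)"
  using pp le_sub by (metis right_diff_distrib)

lemma labs_mult: "labs (a * b) \<le> labs a * labs (b::'a)"
proof -
  let ?pa = "lpos a" and ?na = "lneg a" and ?pb = "lpos b" and ?nb = "lneg b"
  have "a * b = (?pa - ?na) * (?pb - ?nb)" by (simp add: pos_neg)
  also have "\<dots> = (?pa * ?pb + ?na * ?nb) - (?pa * ?nb + ?na * ?pb)" by (simp add: algebra_simps)
  finally have e: "a * b = (?pa * ?pb + ?na * ?nb) - (?pa * ?nb + ?na * ?pb)" .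
  have g: "0 \<le> ?pa * ?pb + ?na * ?nb" "0 \<le> ?pa * ?nb + ?na * ?pb"
    using add_le2 pp lpos_ge0 lneg_ge0 by (metis add_0)+
  have "labs (a * b) \<le> (?pa * ?pb + ?na * ?nb) + (?pa * ?nb + ?na * ?pb)"
    unfolding e by (rule labs_diff_pos[OF g])
  also have "\<dots> = labs a * labs b" by (simp add: labs_pos_neg algebra_simps)
  finally show ?thesis .
qed


lemma posf_mono: "posf h \<Longrightarrow> a \<le> b \<Longrightarrow> h a \<le> h (b::'a)"
  unfolding posf_def using le_sub[of a b] bld[of h b a] by auto

lemma posf_abs: "posf h \<Longrightarrow> \<bar>h z\<bar> \<le> h (labs (z::'a))"
proof -
  assume h: "posf h"
  then have bl: "bounded_linear h" and p: "\<And>z. 0 \<le> z \<Longrightarrow> 0 \<le> h z" unfolding posf_def by auto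
  have "h z = h (lpos z) - h (lneg z)" using pos_neg[of z] bld[OF bl] by metis
  moreover have "h (labs z) = h (lpos z) + h (lneg z)" using labs_pos_neg[of z] bla[OF bl] by metis
  moreover have "0 \<le> h (lpos z)" "0 \<le> h (lneg z)" using p lpos_ge0 lneg_ge0 by auto
  ultimately show ?thesis by linarith
qed

lemma posf_left: "posf g \<Longrightarrow> 0 \<le> c \<Longrightarrow> posf (\<lambda>z. g (c * (z::'a)))"
  unfolding posf_def
  using bounded_linear_compose[of g "\<lambda>z. c * z"] bounded_linear_mult_right[of c] pp by auto

lemma decomp:
  assumes f: "bounded_linear (f::'a \<Rightarrow> real)"
  shows "\<exists>g. posf g \<and> posf (\<lambda>z. g z - f z)"
proof -
  obtain K where K: "K > 0" "\<And>x. norm (f x) \<le> norm x * K"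
    using bounded_linear.pos_bounded[OF f] by blast
  have f0: "f 0 = 0" using bl0[OF f] .
  define S where "S a = {y. 0 \<le> y \<and> y \<le> a}" for a :: 'a
  define P where "P a = Sup (f ` S a)" for a
  have nm_le: "norm y \<le> norm a" if "0 \<le> y" "y \<le> a" for y a :: 'a
    using nm[of y a] labs_of_pos[of y] labs_of_pos[of a] that order_trans by metis
  have bdd: "bdd_above (f ` S a)" if "0 \<le> a" for a
  proof (rule bdd_aboveI2)
    fix y assume "y \<in> S a"
    then have "norm y \<le> norm a" using nm_le S_def by auto
    then show "f y \<le> norm a * K" using K(2)[of y] K(1)
      by (smt (verit, best) mult_right_mono real_norm_def)
  qed
  have ne: "f ` S a \<noteq> {}" if "0 \<le> a" for a using that S_def by auto
  have upper: "f y \<le> P a" if "0 \<le> y" "y \<le> a" for y a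
    unfolding P_def using that bdd[of a] by (intro cSup_upper) (auto simp: S_def intro: order_trans)
  have least: "P a \<le> c" if "0 \<le> a" "\<And>y. 0 \<le> y \<Longrightarrow> y \<le> a \<Longrightarrow> f y \<le> c" for a c
    unfolding P_def using that ne[of a] by (intro cSup_least) (auto simp: S_def)
  have Pbound: "P a \<le> norm a * K" if "0 \<le> a" for a
    using that least[of a] bdd
    by (smt (verit, best) K mult_right_mono nm_le norm_ge_zero real_norm_def)
  have P0: "0 \<le> P a" if "0 \<le> a" for a using upper[of 0 a] that f0 by simp
  have Pf: "f a \<le> P a" if "0 \<le> a" for a using upper[of a a] that by simp
  have Pzero: "P 0 = 0"
  proof -
    have "P 0 \<le> 0" by (rule least) (auto simp: f0 dest: antisym)
    then show ?thesis using P0[of 0] by simp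
  qed
  have Padd: "P (a + b) = P a + P b" if a: "0 \<le> a" and b: "0 \<le> b" for a b
  proof (rule antisym)
    have ab: "0 \<le> a + b" using add_le2[OF a b] by simp
    show "P (a + b) \<le> P a + P b"
    proof (rule least[OF ab])
      fix y assume y: "0 \<le> y" "y \<le> a + b"
      note r = riesz[OF y(1) a b y(2)]
      have "f y = f (inf y a) + f (y - inf y a)" using bla[OF f, of "inf y a" "y - inf y a"] by simp
      also have "\<dots> \<le> P a + P b" using upper r by (intro add_mono) auto
      finally show "f y \<le> P a + P b" .
    qed
    have "P b \<le> P (a + b) - P a"
    proof (rule least[OF b])
      fix y2 assume y2: "0 \<le> y2" "y2 \<le> b"
      have "P a \<le> P (a + b) - f y2"
      proof (rule least[OF a])
        fix y1 assume y1: "0 \<le> y1" "y1 \<le> a"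
        have "f (y1 + y2) \<le> P (a + b)" using upper add_le2[OF y1(1) y2(1)] add_le2[OF y1(2) y2(2)] by simp
        then show "f y1 \<le> P (a + b) - f y2" using bla[OF f] by simp
      qed
      then show "f y2 \<le> P (a + b) - P a" by simp
    qed
    then show "P a + P b \<le> P (a + b)" by simp
  qed
  have Pscale: "P (c *\<^sub>R a) = c * P a" if a: "0 \<le> a" and c: "0 \<le> c" for a c
  proof (cases "c = 0")
    case True then show ?thesis by (simp add: Pzero)
  next
    case False
    then have cp: "c > 0" using c by simp
    have ca: "0 \<le> c *\<^sub>R a" using sc a c by simp
    show ?thesis
    proof (rule antisym)
      show "P (c *\<^sub>R a) \<le> c * P a"
      proof (rule least[OF ca])
        fix y assume y: "0 \<le> y" "y \<le> c *\<^sub>R a"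
        have "0 \<le> (1/c) *\<^sub>R y" "(1/c) *\<^sub>R y \<le> a"
          using sc[OF y(1), of "1/c"] scale_le[OF y(2), of "1/c"] cp by auto
        then have "f ((1/c) *\<^sub>R y) \<le> P a" using upper by simp
        then have "(1/c) * f y \<le> P a" using bls[OF f] by simp
        then show "f y \<le> c * P a" using cp by (simp add: field_simps)
      qed
      have "P a \<le> P (c *\<^sub>R a) / c"
      proof (rule least[OF a])
        fix y assume y: "0 \<le> y" "y \<le> a"
        have "0 \<le> c *\<^sub>R y" "c *\<^sub>R y \<le> c *\<^sub>R a" using sc[OF y(1) c] scale_le[OF y(2) c] by auto
        then have "f (c *\<^sub>R y) \<le> P (c *\<^sub>R a)" using upper by simp
        then have "c * f y \<le> P (c *\<^sub>R a)" using bls[OF f] by simp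
        then show "f y \<le> P (c *\<^sub>R a) / c" using cp by (simp add: field_simps)
      qed
      then show "c * P a \<le> P (c *\<^sub>R a)" using cp by (simp add: field_simps)
    qed
  qed
  define g where "g x = P (lpos x) - P (lneg x)" for x
  have gdec: "g (a - b) = P a - P b" if a: "0 \<le> a" and b: "0 \<le> b" for a b
  proof -
    have "lpos (a - b) + b = a + lneg (a - b)" using pos_neg[of "a - b"] by (simp add: algebra_simps)
    then have "P (lpos (a - b)) + P b = P a + P (lneg (a - b))"
      using Padd a b lpos_ge0 lneg_ge0 by metis
    then show ?thesis unfolding g_def by simp
  qed
  have gadd: "g (x + y) = g x + g y" for x y
  proof -
    have "x + y = (lpos x + lpos y) - (lneg x + lneg y)" using pos_neg[of x] pos_neg[of y]
      by (metis add_diff_add)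
    then have "g (x + y) = P (lpos x + lpos y) - P (lneg x + lneg y)"
      using gdec add_le2 lpos_ge0 lneg_ge0 by (metis add_0)
    then show ?thesis unfolding g_def using Padd lpos_ge0 lneg_ge0 by simp
  qed
  have gscale: "g (c *\<^sub>R x) = c *\<^sub>R g x" for c x
  proof (cases "0 \<le> c")
    case True
    have "c *\<^sub>R x = c *\<^sub>R lpos x - c *\<^sub>R lneg x" using pos_neg[of x] by (metis scaleR_right_diff_distrib)
    then have "g (c *\<^sub>R x) = P (c *\<^sub>R lpos x) - P (c *\<^sub>R lneg x)"
      using gdec sc True lpos_ge0 lneg_ge0 by metis
    then show ?thesis unfolding g_def using Pscale True lpos_ge0 lneg_ge0 by (simp add: algebra_simps)
  next
    case False
    then have c: "0 \<le> -c" by simp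
    have "c *\<^sub>R x = (-c) *\<^sub>R lneg x - (-c) *\<^sub>R lpos x" using pos_neg[of x]
      by (metis minus_diff_eq scaleR_minus_left scaleR_right_diff_distrib)
    then have "g (c *\<^sub>R x) = P ((-c) *\<^sub>R lneg x) - P ((-c) *\<^sub>R lpos x)"
      using gdec sc c lpos_ge0 lneg_ge0 by metis
    moreover have "P ((-c) *\<^sub>R lneg x) = (-c) * P (lneg x)" "P ((-c) *\<^sub>R lpos x) = (-c) * P (lpos x)"
      using Pscale c lpos_ge0 lneg_ge0 by blast+
    ultimately show ?thesis unfolding g_def by (simp add: algebra_simps)
  qed
  have gbound: "norm (g x) \<le> norm x * (2 * K)" for x
  proof -
    have n1: "norm (lpos x) \<le> norm x" using nm[of "lpos x" x] labs_of_pos[OF lpos_ge0] lpos_le_labs by metis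
    have n2: "norm (lneg x) \<le> norm x" using nm[of "lneg x" x] labs_of_pos[OF lneg_ge0] lneg_le_labs by metis
    have "P (lpos x) \<le> norm x * K" using Pbound[OF lpos_ge0] n1 K(1)
      by (smt (verit) mult_right_mono)
    moreover have "P (lneg x) \<le> norm x * K" using Pbound[OF lneg_ge0] n2 K(1)
      by (smt (verit) mult_right_mono)
    moreover have "0 \<le> P (lpos x)" "0 \<le> P (lneg x)" using P0 lpos_ge0 lneg_ge0 by auto
    ultimately show ?thesis unfolding g_def by simp
  qed
  have blg: "bounded_linear g" by (rule bounded_linear_intro[OF gadd gscale gbound])
  have gpos: "g z = P z" if "0 \<le> z" for z using gdec[OF that order_refl] Pzero by simp
  have "posf g" unfolding posf_def using blg gpos P0 by simp
  moreover have "posf (\<lambda>z. g z - f z)" unfolding posf_def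
    using bounded_linear_sub[OF blg f] gpos Pf by simp
  ultimately show ?thesis by blast
qed

lemma weak_via_pos:
  assumes "\<And>h. posf h \<Longrightarrow> ((\<lambda>i. h (z i)) \<longlongrightarrow> 0) F"
  shows "weak_conv (z::_ \<Rightarrow> 'a) 0 F"
  unfolding weak_conv_def
proof (intro allI impI)
  fix f :: "'a \<Rightarrow> real" assume f: "bounded_linear f"
  obtain g where g: "posf g" "posf (\<lambda>z. g z - f z)" using decomp[OF f] by blast
  have "((\<lambda>i. g (z i) - (g (z i) - f (z i))) \<longlongrightarrow> 0 - 0) F"
    using assms[OF g(1)] assms[OF g(2)] by (intro tendsto_diff)
  then show "((\<lambda>i. f (z i)) \<longlongrightarrow> f 0) F" using bl0[OF f] by simp
qed


lemma mw_pos: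
  assumes mw: "mw_conv xs x F" and v: "0 \<le> v" and k: "posf k"
  shows "((\<lambda>a. k (labs (xs a - x) * v)) \<longlongrightarrow> 0) F"
proof -
  have "bounded_linear k" using k posf_def by auto
  moreover have "weak_conv (\<lambda>i. labs (xs i - x) * v) 0 F" using mw v unfolding mw_conv_def by blast
  ultimately have "((\<lambda>i. k (labs (xs i - x) * v)) \<longlongrightarrow> k 0) F" unfolding weak_conv_def by blast
  then show ?thesis using \<open>bounded_linear k\<close> by (simp add: bl0)
qed

lemma cross_inc:
  assumes dir: "directed_set le" and mw: "mw_conv xs x (net_filter le)"
    and inc: "\<And>a b. le a b \<Longrightarrow> xs a \<le> xs b" and a0: "le a0 a" and w: "0 \<le> w" and h: "posf h"
  shows "h (labs (xs a - x) * w) \<le> 2 * h (labs (x - xs a0) * (w::'a))"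
proof -
  have bl: "bounded_linear h" using h posf_def by auto
  define p where "p = xs a - xs a0"
  define q where "q = x - xs a0"
  have p0: "0 \<le> p" unfolding p_def using le_sub[THEN iffD1, OF inc[OF a0]] .
  have e: "xs a - x = p + (-q)" by (simp add: p_def q_def)
  have "labs (xs a - x) \<le> p + labs q"
    using labs_triangle[of p "-q"] labs_of_pos[OF p0] labs_minus[of q] e by simp
  then have "labs (xs a - x) * w \<le> p * w + labs q * w" using mult_le_r[OF _ w] by (metis distrib_right)
  then have "h (labs (xs a - x) * w) \<le> h (p * w + labs q * w)" by (rule posf_mono[OF h])
  then have s3: "h (labs (xs a - x) * w) \<le> h (p * w) + h (labs q * w)"
    by (simp add: bla[OF bl])
  have s5: "h (q * w) \<le> h (labs q * w)" using posf_mono[OF h] mult_le_r[OF le_labs(1) w] by blast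
  let ?F = "net_filter le"
  have t: "((\<lambda>b. h (labs (xs b - x) * w)) \<longlongrightarrow> 0) ?F" by (rule mw_pos[OF mw w h])
  have bnd: "\<bar>h ((xs b - x) * w)\<bar> \<le> h (labs (xs b - x) * w)" for b
  proof -
    have "\<bar>h ((xs b - x) * w)\<bar> \<le> h (labs ((xs b - x) * w))" by (rule posf_abs[OF h])
    also have "\<dots> \<le> h (labs (xs b - x) * labs w)" by (rule posf_mono[OF h labs_mult])
    finally show ?thesis using labs_of_pos[OF w] by simp
  qed
  have bnd2: "- h (labs (xs b - x) * w) \<le> h ((xs b - x) * w) \<and> h ((xs b - x) * w) \<le> h (labs (xs b - x) * w)" for b
    using bnd[of b] by (simp add: abs_le_iff)
  have psi: "((\<lambda>b. h ((xs b - x) * w)) \<longlongrightarrow> 0) ?F"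
  proof (rule tendsto_sandwich[of "\<lambda>b. - h (labs (xs b - x) * w)" _ _ "\<lambda>b. h (labs (xs b - x) * w)"])
    show "\<forall>\<^sub>F n in ?F. - h (labs (xs n - x) * w) \<le> h ((xs n - x) * w)"
      using bnd2 by (simp add: always_eventually)
    show "\<forall>\<^sub>F n in ?F. h ((xs n - x) * w) \<le> h (labs (xs n - x) * w)"
      using bnd2 by (simp add: always_eventually)
    show "((\<lambda>b. - h (labs (xs b - x) * w)) \<longlongrightarrow> 0) ?F" using tendsto_minus[OF t] by simp
  qed (rule t)
  have eqphi: "h ((xs b - xs a0) * w) = h ((xs b - x) * w) + h (q * w)" for b
    using bla[OF bl, of "(xs b - x) * w" "q * w"] by (simp add: q_def algebra_simps)
  have lim: "((\<lambda>b. h ((xs b - xs a0) * w)) \<longlongrightarrow> h (q * w)) ?F"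
    unfolding eqphi using tendsto_add[OF psi tendsto_const[of "h (q * w)"]] by simp
  have ev: "eventually (\<lambda>b. h (p * w) \<le> h ((xs b - xs a0) * w)) ?F"
    unfolding eventually_net[OF dir]
  proof (intro exI allI impI)
    fix b assume "le a b"
    then have "xs a - xs a0 \<le> xs b - xs a0" using tr[OF inc, of a b "- xs a0"] by simp
    then show "h (p * w) \<le> h ((xs b - xs a0) * w)" unfolding p_def
      by (rule posf_mono[OF h mult_le_r[OF _ w]])
  qed
  have s4: "h (p * w) \<le> h (q * w)" by (rule tendsto_lowerbound[OF lim ev net_nontriv[OF dir]])
  show ?thesis using s3 s4 s5 unfolding q_def by simp
qed

lemma cross:
  assumes dir: "directed_set le" and mw: "mw_conv xs x (net_filter le)"
    and mono: "monotone_net le xs" and a0: "le a0 a" and w: "0 \<le> w" and h: "posf h"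
  shows "h (labs (xs a - x) * w) \<le> 2 * h (labs (x - xs a0) * (w::'a))"
proof (cases "\<forall>a b. le a b \<longrightarrow> xs a \<le> xs b")
  case True
  then have "\<And>a b. le a b \<Longrightarrow> xs a \<le> xs b" by blast
  then show ?thesis by (rule cross_inc[OF dir mw _ a0 w h])
next
  case False
  then have dec0: "\<And>a b. le a b \<Longrightarrow> xs b \<le> xs a" using mono unfolding monotone_net_def by blast
  have dec: "\<And>a b. le a b \<Longrightarrow> - xs a \<le> - xs b" by (rule neg_le, rule dec0)
  have eq: "labs (- xs i - - x) = labs (xs i - x)" for i
    using labs_minus[of "xs i - x"] by simp
  have mw': "mw_conv (\<lambda>i. - xs i) (- x) (net_filter le)" using mw unfolding mw_conv_def eq .
  have "h (labs (- xs a - - x) * w) \<le> 2 * h (labs (- x - - xs a0) * w)"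
    by (rule cross_inc[OF dir mw' dec a0 w h])
  moreover have e2: "labs (- x - - xs a0) = labs (x - xs a0)"
    using labs_minus[of "x - xs a0"] by (simp only: minus_diff_eq diff_minus_eq_add) (simp add: algebra_simps)
  ultimately show ?thesis unfolding eq e2 by simp
qed


lemma main:
  fixes le :: "'i \<Rightarrow> 'i \<Rightarrow> bool"
  assumes dir: "directed_set le"
    and mwx: "mw_conv xs x (net_filter le)" and mwy: "mw_conv ys y (net_filter le)"
    and mono: "monotone_net le xs \<or> monotone_net le ys"
  shows "mw_conv (\<lambda>(a, b). xs a * ys b) (x * (y::'a)) (net_filter (prod_order le le))"
  unfolding mw_conv_def
proof (intro allI impI weak_via_pos)
  fix u :: 'a and g :: "'a \<Rightarrow> real"
  assume u: "0 \<le> u" and g: "posf g"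
  let ?F = "net_filter (prod_order le le)"
  have bl: "bounded_linear g" using g posf_def by auto
  define A where "A a = labs (xs a - x)" for a
  define B where "B b = labs (ys b - y)" for b
  have A0: "0 \<le> A a" for a unfolding A_def by (rule labs_ge0)
  have B0: "0 \<le> B b" for b unfolding B_def by (rule labs_ge0)
  define T1 where "T1 (p::'i \<times> 'i) = g (A (fst p) * (B (snd p) * u))" for p
  define T2 where "T2 (p::'i \<times> 'i) = g (labs x * (B (snd p) * u))" for p
  define T3 where "T3 (p::'i \<times> 'i) = g (A (fst p) * (labs y * u))" for p
  have T2: "(T2 \<longlongrightarrow> 0) ?F"
  proof -
    have "((\<lambda>b. g (labs x * (B b * u))) \<longlongrightarrow> 0) (net_filter le)"
      unfolding B_def by (rule mw_pos[OF mwy u posf_left[OF g labs_ge0]])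
    from filterlim_compose[OF this lim_snd[OF dir]] show ?thesis unfolding T2_def .
  qed
  have T3: "(T3 \<longlongrightarrow> 0) ?F"
  proof -
    have "((\<lambda>a. g (A a * (labs y * u))) \<longlongrightarrow> 0) (net_filter le)"
      unfolding A_def by (rule mw_pos[OF mwx pp[OF labs_ge0 u] g])
    from filterlim_compose[OF this lim_fst[OF dir]] show ?thesis unfolding T3_def .
  qed
  have T1pos: "0 \<le> T1 p" for p
    unfolding T1_def using g pp[OF A0 pp[OF B0 u]] unfolding posf_def by blast
  have T1: "(T1 \<longlongrightarrow> 0) ?F"
    using mono
  proof
    assume mx: "monotone_net le xs"
    define a0 where "a0 = (undefined :: 'i)"
    define C where "C = labs (x - xs a0)"
    have ev: "eventually (\<lambda>p. le a0 (fst p)) ?F"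
      unfolding eventually_net[OF dir_prod[OF dir]]
      by (rule exI[of _ "(a0, a0)"]) (simp add: prod_order_def)
    have bnd: "eventually (\<lambda>p. T1 p \<le> 2 * g (C * (B (snd p) * u))) ?F"
      using ev
    proof (rule eventually_mono)
      fix p :: "'i \<times> 'i" assume "le a0 (fst p)"
      from cross[OF dir mwx mx this pp[OF B0 u] g] show "T1 p \<le> 2 * g (C * (B (snd p) * u))"
        unfolding T1_def A_def C_def .
    qed
    have l1: "((\<lambda>b. g (C * (B b * u))) \<longlongrightarrow> 0) (net_filter le)"
      unfolding B_def by (rule mw_pos[OF mwy u posf_left[OF g]]) (simp add: C_def labs_ge0)
    have up: "((\<lambda>p. 2 * g (C * (B (snd p) * u))) \<longlongrightarrow> 0) ?F"
      using tendsto_mult[OF tendsto_const[of "2::real"] filterlim_compose[OF l1 lim_snd[OF dir]]] by simp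
    show ?thesis
      by (rule tendsto_sandwich[OF always_eventually bnd tendsto_const up]) (simp add: T1pos)
  next
    assume my: "monotone_net le ys"
    define b0 where "b0 = (undefined :: 'i)"
    define C where "C = labs (y - ys b0)"
    have ev: "eventually (\<lambda>p. le b0 (snd p)) ?F"
      unfolding eventually_net[OF dir_prod[OF dir]]
      by (rule exI[of _ "(b0, b0)"]) (simp add: prod_order_def)
    have bnd: "eventually (\<lambda>p. T1 p \<le> 2 * g (A (fst p) * (C * u))) ?F"
      using ev
    proof (rule eventually_mono)
      fix p :: "'i \<times> 'i" assume "le b0 (snd p)"
      from cross[OF dir mwy my this u posf_left[OF g A0]] show "T1 p \<le> 2 * g (A (fst p) * (C * u))"
        unfolding T1_def B_def C_def .
    qed
    have l1: "((\<lambda>a. g (A a * (C * u))) \<longlongrightarrow> 0) (net_filter le)"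
      unfolding A_def by (rule mw_pos[OF mwx _ g]) (simp add: C_def pp labs_ge0 u)
    have up: "((\<lambda>p. 2 * g (A (fst p) * (C * u))) \<longlongrightarrow> 0) ?F"
      using tendsto_mult[OF tendsto_const[of "2::real"] filterlim_compose[OF l1 lim_fst[OF dir]]] by simp
    show ?thesis
      by (rule tendsto_sandwich[OF always_eventually bnd tendsto_const up]) (simp add: T1pos)
  qed
  have pw: "0 \<le> g (labs ((case p of (a, b) \<Rightarrow> xs a * ys b) - x * y) * u) \<and>
            g (labs ((case p of (a, b) \<Rightarrow> xs a * ys b) - x * y) * u) \<le> T1 p + T2 p + T3 p" for p
  proof -
    obtain a b where p: "p = (a, b)" by (cases p)
    have e: "xs a * ys b - x * y = (xs a - x) * (ys b - y) + x * (ys b - y) + (xs a - x) * y"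
      by (simp add: algebra_simps)
    have "labs (xs a * ys b - x * y) \<le> labs ((xs a - x) * (ys b - y) + x * (ys b - y)) + labs ((xs a - x) * y)"
      unfolding e by (rule labs_triangle)
    also have "\<dots> \<le> (labs ((xs a - x) * (ys b - y)) + labs (x * (ys b - y))) + labs ((xs a - x) * y)"
      by (rule add_le2[OF labs_triangle order_refl])
    also have "\<dots> \<le> (A a * B b + labs x * B b) + A a * labs y"
      unfolding A_def B_def by (intro add_le2 labs_mult)
    finally have "labs (xs a * ys b - x * y) * u \<le> ((A a * B b + labs x * B b) + A a * labs y) * u"
      by (rule mult_le_r[OF _ u])
    then have "g (labs (xs a * ys b - x * y) * u) \<le> g (((A a * B b + labs x * B b) + A a * labs y) * u)"
      by (rule posf_mono[OF g])
    also have "\<dots> = T1 p + T2 p + T3 p"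
      unfolding T1_def T2_def T3_def p by (simp add: distrib_right mult.assoc bla[OF bl])
    finally have "g (labs (xs a * ys b - x * y) * u) \<le> T1 p + T2 p + T3 p" .
    moreover have "0 \<le> g (labs (xs a * ys b - x * y) * u)" using g pp[OF labs_ge0 u] unfolding posf_def by blast
    ultimately show ?thesis unfolding p by simp
  qed
  show "((\<lambda>i. g (labs ((case i of (a, b) \<Rightarrow> xs a * ys b) - x * y) * u)) \<longlongrightarrow> 0) ?F"
  proof (rule tendsto_sandwich[OF always_eventually always_eventually tendsto_const])
    show "((\<lambda>p. T1 p + T2 p + T3 p) \<longlongrightarrow> 0) ?F" using tendsto_add[OF tendsto_add[OF T1 T2] T3] by simp
    show "\<forall>q. 0 \<le> g (labs ((case q of (a, b) \<Rightarrow> xs a * ys b) - x * y) * u)"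
      using pw by blast
    show "\<forall>p. g (labs ((case p of (a, b) \<Rightarrow> xs a * ys b) - x * y) * u) \<le> T1 p + T2 p + T3 p"
      using pw by blast
  qed
qed

end

theorem proposition2p7:
  fixes le :: "'i \<Rightarrow> 'i \<Rightarrow> bool"
    and xs ys :: "'i \<Rightarrow> 'a::{real_normed_algebra, banach, lattice}"
    and x y :: 'a
  assumes "banach_f_algebra TYPE('a)"
    and "directed_set le"
    and "mw_conv xs x (net_filter le)"
    and "mw_conv ys y (net_filter le)"
    and "monotone_net le xs \<or> monotone_net le ys"
  shows "mw_conv (\<lambda>(a, b). xs a * ys b) (x * y) (net_filter (prod_order le le))"
proof -
  have vl: "vector_lattice TYPE('a)" and fa: "f_algebra TYPE('a)"
    and nm: "\<And>x y::'a. labs x \<le> labs y \<Longrightarrow> norm x \<le> norm y"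
    using assms(1) unfolding banach_f_algebra_def f_algebra_def by blast+
  have tr: "\<And>x y z::'a. x \<le> y \<Longrightarrow> x + z \<le> y + z"
    and sc: "\<And>(x::'a) (c::real). 0 \<le> x \<Longrightarrow> 0 \<le> c \<Longrightarrow> 0 \<le> c *\<^sub>R x"
    using vl unfolding vector_lattice_def by blast+
  have pp: "\<And>x y::'a. 0 \<le> x \<Longrightarrow> 0 \<le> y \<Longrightarrow> 0 \<le> x * y"
    using fa unfolding f_algebra_def by blast
  show ?thesis by (rule main[OF tr sc pp nm assms(2-5)])
qed

end
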